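(* Let $R$ be an integral domain and $f\in R[[X]]$. (1) If $f$ is irreducible in $R[[X]]$, then $(f_0)\neq R$, and for any $a,b\in R$ with $f_0=ab$ and $(a,b)=R$ one has $(a)=R$ or $(b)=R$. Conversely, if $(f_1)=R$, $(f_0)\ne R$, and for all $a,b\in R$ with $f_0=ab$ and $(a,b)=R$ one has $(a)=R$ or $(b)=R$, then $f$ is irreducible in $R[[X]]$. (2) If $R$ is a PID and $f$ is irreducible in $R[[X]]$, then either $(f)=(X)$ or $f_0$ is associate to a power of a prime element of $R$. (3) If $R$ is a UFD but not a PID, then there exist irreducible elements of $R[[X]]$ whose constant term is neither zero nor associate to a power of a prime; in fact, if $\pi,\sigma\in R$ are nonassociate primes with $(\pi,\sigma)\neq R$, then $\pi\sigma+XU$ is irreducible in $R[[X]]$ for every unit $U\in R[[X]]$.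
   Context: $f_i$ denotes the coefficient of $X^i$ in $f$. A nonzero element $a$ is prime if $(a)$ is a prime ideal. *)

theory Defs
  imports "HOL-Computational_Algebra.Computational_Algebra"
begin

definition ring_ideal :: "'a::comm_ring_1 set \<Rightarrow> bool" where
  "ring_ideal I \<longleftrightarrow> 0 \<in> I \<and> (\<forall>x\<in>I. \<forall>y\<in>I. x + y \<in> I) \<and> (\<forall>r. \<forall>x\<in>I. r * x \<in> I)"

definition is_PID :: "'a::idom itself \<Rightarrow> bool" where
  "is_PID _ \<longleftrightarrow> (\<forall>I::'a set. ring_ideal I \<longrightarrow> (\<exists>a. I = {a * r | r. True}))"

definition comaximal :: "'a::comm_ring_1 \<Rightarrow> 'a \<Rightarrow> bool" where
  "comaximal a b \<longleftrightarrow> (\<exists>x y. a * x + b * y = 1)"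

definition associated :: "'a::comm_ring_1 \<Rightarrow> 'a \<Rightarrow> bool" where
  "associated a b \<longleftrightarrow> a dvd b \<and> b dvd a"

end

theory Submission imports Defs begin

lemma fps_unit_iff0: "(f::'a::comm_ring_1 fps) dvd 1 \<longleftrightarrow> f$0 dvd 1"
proof
  assume "f dvd 1"
  then obtain g where "1 = f * g" by (auto simp: dvd_def)
  hence "1 = f$0 * g$0" by (metis fps_mult_nth_0 fps_one_nth)
  thus "f$0 dvd 1" by (auto simp: dvd_def)
next
  assume "f$0 dvd 1"
  then obtain y where "1 = f$0 * y" by (auto simp: dvd_def)
  hence "f * fps_right_inverse f y = 1" using fps_right_inverse by metis
  thus "f dvd 1" by (metis dvd_triv_left)
qed

primrec cf :: "'a::comm_ring_1 fps \<Rightarrow> 'a \<Rightarrow> 'a \<Rightarrow> 'a \<Rightarrow> 'a \<Rightarrow> nat \<Rightarrow> nat \<Rightarrow> 'a \<times> 'a" where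
  "cf f a b x y 0 = (\<lambda>k. (a,b))"
| "cf f a b x y (Suc n) = (let S = cf f a b x y n;
      r = f$(Suc n) - (\<Sum>i\<in>{1..n}. fst (S i) * snd (S (Suc n - i))) in S(Suc n := (y*r, x*r)))"

lemma cf_stable: "k \<le> n \<Longrightarrow> cf f a b x y n k = cf f a b x y k k"
proof (induction n)
  case 0 then show ?case by simp
next
  case (Suc n)
  show ?case
  proof (cases "k = Suc n")
    case False
    then have "k \<le> n" using Suc.prems by simp
    then show ?thesis using Suc.IH False by (simp add: Let_def)
  qed simp
qed

lemma cf_factor:
  fixes f :: "'a::comm_ring_1 fps"
  assumes "a*x + b*y = 1" "f$0 = a*b"
  shows "Abs_fps (\<lambda>k. fst (cf f a b x y k k)) * Abs_fps (\<lambda>k. snd (cf f a b x y k k)) = f"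
proof (rule fps_ext)
  fix n
  define G where "G = Abs_fps (\<lambda>k. fst (cf f a b x y k k))"
  define H where "H = Abs_fps (\<lambda>k. snd (cf f a b x y k k))"
  show "(G * H) $ n = f $ n"
  proof (cases n)
    case 0 then show ?thesis using assms by (simp add: G_def H_def)
  next
    case (Suc m)
    define S where "S = cf f a b x y m"
    define r where "r = f$(Suc m) - (\<Sum>i\<in>{1..m}. fst (S i) * snd (S (Suc m - i)))"
    have top: "cf f a b x y (Suc m) (Suc m) = (y*r, x*r)" by (simp add: S_def r_def Let_def)
    have mid: "(\<Sum>i\<in>{1..m}. G$i * H$(Suc m - i)) = (\<Sum>i\<in>{1..m}. fst (S i) * snd (S (Suc m - i)))"
    proof (rule sum.cong)
      fix i assume i: "i \<in> {1..m}"
      have "cf f a b x y i i = S i" unfolding S_def by (rule cf_stable[symmetric]) (use i in auto)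
      moreover have "cf f a b x y (Suc m - i) (Suc m - i) = S (Suc m - i)"
        unfolding S_def by (rule cf_stable[symmetric]) (use i in auto)
      ultimately show "G$i * H$(Suc m - i) = fst (S i) * snd (S (Suc m - i))"
        by (simp add: G_def H_def)
    qed simp
    have "(G * H) $ Suc m = (\<Sum>i=0..Suc m. G$i * H$(Suc m - i))" by (simp add: fps_mult_nth)
    also have "\<dots> = G$0 * H$(Suc m) + (\<Sum>i=1..Suc m. G$i * H$(Suc m - i))"
      by (simp add: sum.atLeast_Suc_atMost)
    also have "(\<Sum>i=1..Suc m. G$i * H$(Suc m - i)) = (\<Sum>i=1..m. G$i * H$(Suc m - i)) + G$(Suc m) * H$0"
      by (simp add: sum.cl_ivl_Suc)
    also have "G$0 * H$(Suc m) + ((\<Sum>i=1..m. G$i * H$(Suc m - i)) + G$(Suc m) * H$0)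
        = a * (x*r) + ((\<Sum>i\<in>{1..m}. fst (S i) * snd (S (Suc m - i))) + y*r*b)"
      using mid top by (simp add: G_def H_def)
    also have "\<dots> = r * (a*x + b*y) + (\<Sum>i\<in>{1..m}. fst (S i) * snd (S (Suc m - i)))"
      by (simp add: algebra_simps)
    also have "\<dots> = f $ Suc m" using assms(1) by (simp add: r_def)
    finally show ?thesis using Suc by simp
  qed
qed

lemma part1a:
  fixes f :: "'a::idom fps"
  assumes irr: "irreducible f"
  shows "\<not> (f $ 0) dvd 1 \<and> (\<forall>a b. f $ 0 = a * b \<and> comaximal a b \<longrightarrow> a dvd 1 \<or> b dvd 1)"
proof
  show "\<not> (f $ 0) dvd 1" using irr fps_unit_iff0 irreducible_not_unit by blast
  show "\<forall>a b. f $ 0 = a * b \<and> comaximal a b \<longrightarrow> a dvd 1 \<or> b dvd 1"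
  proof (intro allI impI)
    fix a b assume h: "f $ 0 = a * b \<and> comaximal a b"
    then obtain x y where xy: "a*x + b*y = 1" by (auto simp: comaximal_def)
    define G where "G = Abs_fps (\<lambda>k. fst (cf f a b x y k k))"
    define H where "H = Abs_fps (\<lambda>k. snd (cf f a b x y k k))"
    have "f = G * H" using cf_factor[OF xy] h by (simp add: G_def H_def)
    then have "G dvd 1 \<or> H dvd 1" using irr irreducibleD by blast
    moreover have "G$0 = a" "H$0 = b" by (simp_all add: G_def H_def)
    ultimately show "a dvd 1 \<or> b dvd 1" using fps_unit_iff0 by metis
  qed
qed

lemma part1b:
  fixes f :: "'a::idom fps"
  assumes u1: "(f $ 1) dvd 1" and n0: "\<not> (f $ 0) dvd 1"
    and c: "\<forall>a b. f $ 0 = a * b \<and> comaximal a b \<longrightarrow> a dvd 1 \<or> b dvd 1"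
  shows "irreducible f"
proof (rule irreducibleI)
  show "f \<noteq> 0" using u1 by auto
  show "\<not> f dvd 1" using n0 fps_unit_iff0 by blast
  fix g h assume fgh: "f = g * h"
  obtain w where w: "1 = f$1 * w" using u1 by (auto simp: dvd_def)
  have "f$1 = g$0 * h$1 + g$1 * h$0" using fgh by (simp add: fps_mult_nth_1)
  hence "g$0 * (h$1*w) + h$0 * (g$1*w) = 1" using w by (simp add: algebra_simps)
  hence "comaximal (g$0) (h$0)" by (auto simp: comaximal_def)
  moreover have "f$0 = g$0 * h$0" using fgh by simp
  ultimately have "g$0 dvd 1 \<or> h$0 dvd 1" using c by blast
  thus "g dvd 1 \<or> h dvd 1" using fps_unit_iff0 by blast
qed



lemma prime_dvd_prime_assoc:
  fixes p q :: "'a::idom"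
  assumes "prime_elem p" "prime_elem q" "q dvd p"
  shows "associated p q"
proof -
  obtain t where t: "p = q * t" using assms(3) by (auto simp: dvd_def)
  have "p dvd q \<or> p dvd t" using assms(1) t prime_elem_dvd_mult_iff by (metis dvd_refl)
  moreover have "\<not> p dvd t"
  proof
    assume "p dvd t"
    then obtain s where "t = p * s" by (auto simp: dvd_def)
    hence "p * 1 = p * (q * s)" using t by (simp add: algebra_simps)
    hence "q * s = 1" using assms(1) by (metis mult_cancel_left prime_elem_def)
    hence "q dvd 1" by (metis dvd_triv_left)
    thus False using assms(2) by (simp add: prime_elem_def)
  qed
  ultimately show ?thesis using assms(3) by (auto simp: associated_def)
qed

lemma key3_aux:
  fixes \<pi> \<sigma> a b :: "'a::idom"
  assumes p: "prime_elem \<pi>" and s: "prime_elem \<sigma>" and na: "\<not> associated \<pi> \<sigma>"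
    and nc: "\<not> comaximal \<pi> \<sigma>" and e: "\<pi> * \<sigma> = a * b" and c: "comaximal a b"
    and pa: "\<pi> dvd a"
  shows "b dvd 1"
proof -
  obtain x y where xy: "a*x + b*y = 1" using c by (auto simp: comaximal_def)
  obtain a' where a': "a = \<pi> * a'" using pa by (auto simp: dvd_def)
  have "\<sigma> dvd a * b" using e by (metis dvd_triv_right)
  hence "\<sigma> dvd a \<or> \<sigma> dvd b" using s prime_elem_dvd_mult_iff by blast
  moreover have "\<not> \<sigma> dvd b"
  proof
    assume "\<sigma> dvd b"
    then obtain b' where "b = \<sigma> * b'" by (auto simp: dvd_def)
    hence "\<pi> * (a'*x) + \<sigma> * (b'*y) = 1" using xy a' by (simp add: algebra_simps)
    thus False using nc by (auto simp: comaximal_def)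
  qed
  ultimately have "\<sigma> dvd \<pi> * a'" using a' by simp
  moreover have "\<not> \<sigma> dvd \<pi>"
    using prime_dvd_prime_assoc[OF p s] na by blast
  ultimately have "\<sigma> dvd a'" using s prime_elem_dvd_mult_iff by blast
  then obtain c where "a' = \<sigma> * c" by (auto simp: dvd_def)
  hence "(\<pi> * \<sigma>) * 1 = (\<pi> * \<sigma>) * (c * b)" using e a' by (simp add: algebra_simps)
  moreover have "\<pi> * \<sigma> \<noteq> 0" using p s by (simp add: prime_elem_def)
  ultimately have "c * b = 1" by (metis mult_cancel_left)
  thus ?thesis by (metis dvd_triv_right)
qed

lemma key3:
  fixes \<pi> \<sigma> a b :: "'a::idom"
  assumes p: "prime_elem \<pi>" and s: "prime_elem \<sigma>" and na: "\<not> associated \<pi> \<sigma>"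
    and nc: "\<not> comaximal \<pi> \<sigma>" and e: "\<pi> * \<sigma> = a * b" and c: "comaximal a b"
  shows "a dvd 1 \<or> b dvd 1"
proof -
  have "\<pi> dvd a * b" using e by (metis dvd_triv_left)
  hence "\<pi> dvd a \<or> \<pi> dvd b" using p prime_elem_dvd_mult_iff by blast
  moreover have "comaximal b a" using c unfolding comaximal_def by (metis add.commute)
  moreover have "\<pi> * \<sigma> = b * a" using e by (simp add: algebra_simps)
  ultimately show ?thesis using key3_aux[OF p s na nc e c] key3_aux[OF p s na nc _ _] by blast
qed

lemma part3b:
  fixes \<pi> \<sigma> :: "'a::idom" and U :: "'a fps"
  assumes p: "prime_elem \<pi>" and s: "prime_elem \<sigma>" and na: "\<not> associated \<pi> \<sigma>"
    and nc: "\<not> comaximal \<pi> \<sigma>" and U: "U dvd 1"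
  shows "irreducible (fps_const (\<pi> * \<sigma>) + fps_X * U)"
proof -
  let ?f = "fps_const (\<pi> * \<sigma>) + fps_X * U"
  have "U$0 dvd 1" using U by (metis fps_mult_nth_0 fps_one_nth dvd_def dvd_triv_left)
  hence u1: "?f $ 1 dvd 1" by simp
  have "?f $ 0 = \<pi> * \<sigma>" by simp
  moreover have "\<not> (\<pi> * \<sigma>) dvd 1" using p by (metis dvd_mult_left prime_elem_def)
  ultimately show ?thesis
    using part1b[of ?f] key3[OF p s na nc] u1 by (metis \<open>\<not> (\<pi> * \<sigma>) dvd 1\<close>)
qed




lemma pid_bezout:
  assumes P: "is_PID TYPE('b::idom)"
  shows "\<exists>d. d dvd a \<and> d dvd b \<and> (\<exists>u v. d = (a::'b)*u + b*v)"
proof -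
  define I where "I = {a*u + b*v | u v. True}"
  have "ring_ideal I" unfolding ring_ideal_def I_def
  proof (intro conjI ballI allI)
    show "0 \<in> {a*u + b*v | u v. True}" by (rule CollectI, rule exI[of _ 0], rule exI[of _ 0]) simp
  next
    fix x y assume "x \<in> {a*u + b*v | u v. True}" "y \<in> {a*u + b*v | u v. True}"
    then obtain u1 v1 u2 v2 where "x = a*u1 + b*v1" "y = a*u2 + b*v2" by blast
    hence "x + y = a*(u1+u2) + b*(v1+v2)" by (simp add: algebra_simps)
    thus "x + y \<in> {a*u + b*v | u v. True}" by blast
  next
    fix r x assume "x \<in> {a*u + b*v | u v. True}"
    then obtain u1 v1 where "x = a*u1 + b*v1" by blast
    hence "r * x = a*(r*u1) + b*(r*v1)" by (simp add: algebra_simps)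
    thus "r * x \<in> {a*u + b*v | u v. True}" by blast
  qed
  then obtain d where d: "I = {d * r | r. True}" using P unfolding is_PID_def by blast
  have "d \<in> I" unfolding d by (rule CollectI, rule exI[of _ 1]) simp
  then obtain u v where "d = a*u + b*v" unfolding I_def by blast
  moreover have "a \<in> I" unfolding I_def by (rule CollectI, rule exI[of _ 1], rule exI[of _ 0]) simp
  hence "d dvd a" unfolding d by (auto simp: dvd_def)
  moreover have "b \<in> I" unfolding I_def by (rule CollectI, rule exI[of _ 0], rule exI[of _ 1]) simp
  hence "d dvd b" unfolding d by (auto simp: dvd_def)
  ultimately show ?thesis by blast
qed

lemma chain_dvd:
  assumes "\<forall>n. g (Suc n) dvd (g n :: 'a::comm_semiring_1)" "m \<le> n"
  shows "g n dvd g m"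
  using assms(2)
proof (induction n)
  case 0 then show ?case by simp
next
  case (Suc n)
  show ?case
  proof (cases "m = Suc n")
    case False
    then have "g n dvd g m" using Suc by simp
    thus ?thesis using assms(1) dvd_trans by blast
  qed simp
qed

lemma pid_acc:
  assumes P: "is_PID TYPE('b::idom)" and ch: "\<forall>n. g (Suc n) dvd (g n :: 'b)"
  shows "\<exists>N. \<forall>n. g N dvd g n"
proof -
  define I where "I = {x. \<exists>n. g n dvd x}"
  have "ring_ideal I" unfolding ring_ideal_def I_def
  proof (intro conjI ballI allI)
    show "0 \<in> {x. \<exists>n. g n dvd x}" by simp
  next
    fix x y assume "x \<in> {x. \<exists>n. g n dvd x}" "y \<in> {x. \<exists>n. g n dvd x}"
    then obtain n m where "g n dvd x" "g m dvd y" by blast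
    moreover have "g (max n m) dvd g n" "g (max n m) dvd g m" using chain_dvd[OF ch] by auto
    ultimately have "g (max n m) dvd x + y" by (meson dvd_add dvd_trans)
    thus "x + y \<in> {x. \<exists>n. g n dvd x}" by blast
  next
    fix r x assume "x \<in> {x. \<exists>n. g n dvd x}"
    thus "r * x \<in> {x. \<exists>n. g n dvd x}" by (auto intro: dvd_mult)
  qed
  then obtain c where c: "I = {c * r | r. True}" using P unfolding is_PID_def by blast
  have "c \<in> I" unfolding c by (rule CollectI, rule exI[of _ 1]) simp
  then obtain N where N: "g N dvd c" unfolding I_def by blast
  have "\<forall>n. c dvd g n"
  proof
    fix n have "g n \<in> I" unfolding I_def mem_Collect_eq by (rule exI[of _ n]) simp
    thus "c dvd g n" unfolding c by (auto simp: dvd_def)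
  qed
  thus ?thesis using N dvd_trans by blast
qed

lemma pid_no_desc:
  assumes P: "is_PID TYPE('b::idom)"
    and g: "\<forall>n. g n \<noteq> 0 \<and> (\<exists>b. g n = g (Suc n) * b \<and> \<not> b dvd (1::'b))"
  shows False
proof -
  have "\<forall>n. g (Suc n) dvd g n" using g by (metis dvd_triv_left)
  then obtain N where N: "\<forall>n. g N dvd g n" using pid_acc[OF P] by blast
  obtain b where b: "g N = g (Suc N) * b" "\<not> b dvd 1" using g by blast
  obtain k where k: "g (Suc N) = g N * k" using N by (auto simp: dvd_def)
  have "g N * 1 = g N * (k * b)" using b k by (simp add: algebra_simps)
  hence "k * b = 1" using g by (metis mult_cancel_left)
  thus False using b(2) by (metis dvd_triv_right)
qed

lemma pid_irr_divisor:
  assumes P: "is_PID TYPE('b::idom)" and x: "(x::'b) \<noteq> 0" "\<not> x dvd 1"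
  shows "\<exists>q. irreducible q \<and> q dvd x"
proof (rule ccontr)
  assume no: "\<not> (\<exists>q. irreducible q \<and> q dvd x)"
  define Q where "Q y \<longleftrightarrow> y dvd x \<and> y \<noteq> 0 \<and> \<not> y dvd 1" for y
  have step: "\<exists>a. Q a \<and> (\<exists>b. y = a * b \<and> \<not> b dvd 1)" if "Q y" for y
  proof -
    have "\<not> irreducible y" using no that by (auto simp: Q_def)
    have "\<exists>a b. y = a * b \<and> \<not> a dvd 1 \<and> \<not> b dvd 1"
      using \<open>\<not> irreducible y\<close> that unfolding Q_def irreducible_def by auto
    then obtain a b where ab: "y = a * b" "\<not> a dvd 1" "\<not> b dvd 1" by blast
    have "Q a" using ab that unfolding Q_def by (auto intro: dvd_trans)
    thus ?thesis using ab by blast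
  qed
  define nx where "nx y = (SOME a. Q a \<and> (\<exists>b. y = a * b \<and> \<not> b dvd 1))" for y
  have nxp: "Q (nx y) \<and> (\<exists>b. y = nx y * b \<and> \<not> b dvd 1)" if "Q y" for y
    unfolding nx_def using someI_ex[OF step[OF that]] .
  define g where "g n = (nx ^^ n) x" for n
  have gQ: "Q (g n)" for n
  proof (induction n)
    case 0 show ?case using x by (simp add: g_def Q_def)
  next
    case (Suc n)
    have "g (Suc n) = nx (g n)" by (simp add: g_def)
    thus ?case using nxp[OF Suc] by simp
  qed
  have "\<forall>n. g n \<noteq> 0 \<and> (\<exists>b. g n = g (Suc n) * b \<and> \<not> b dvd 1)"
  proof
    fix n
    have "g (Suc n) = nx (g n)" by (simp add: g_def)
    thus "g n \<noteq> 0 \<and> (\<exists>b. g n = g (Suc n) * b \<and> \<not> b dvd 1)"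
      using gQ[of n] nxp[OF gQ[of n]] unfolding Q_def by metis
  qed
  thus False using pid_no_desc[OF P] by blast
qed

lemma pid_irr_prime:
  assumes P: "is_PID TYPE('b::idom)" and q: "irreducible (q::'b)"
  shows "prime_elem q"
  unfolding prime_elem_def
proof (intro conjI allI impI)
  show "q \<noteq> 0" "\<not> q dvd 1" using q by (auto simp: irreducible_def)
  fix a b assume qab: "q dvd a * b"
  show "q dvd a \<or> q dvd b"
  proof (cases "q dvd a")
    case True thus ?thesis ..
  next
    case False note na = False
    obtain d u v where d: "d dvd q" "d dvd a" "d = q*u + a*v" using pid_bezout[OF P] by blast
    obtain t where t: "q = d * t" using d(1) by (auto simp: dvd_def)
    have "d dvd 1 \<or> t dvd 1" using q t irreducibleD by blast
    moreover have "\<not> t dvd 1"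
    proof
      assume "t dvd 1"
      then obtain s where s: "1 = t * s" by (auto simp: dvd_def)
      have "d = d * (t * s)" using s by simp
      also have "\<dots> = q * s" using t by (simp add: algebra_simps)
      finally have "q dvd d" by (metis dvd_triv_left)
      thus False using d(2) na dvd_trans by blast
    qed
    ultimately obtain e where e: "1 = d * e" by (auto simp: dvd_def)
    have "b = b * (d * e)" using e by simp
    also have "\<dots> = q * (u*e*b) + (a*b)*(v*e)" using d(3) by (simp add: algebra_simps)
    finally have "b = q * (u*e*b) + (a*b)*(v*e)" .
    moreover have "q dvd q * (u*e*b)" by simp
    moreover have "q dvd (a*b)*(v*e)" using qab by simp
    ultimately have "q dvd b" by (metis dvd_add)
    thus ?thesis ..
  qed
qed

lemma fps_X_factor:
  fixes f :: "'a::comm_ring_1 fps"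
  assumes "f $ 0 = 0" shows "f = fps_X * fps_shift 1 f"
proof (rule fps_ext)
  fix n show "f $ n = (fps_X * fps_shift 1 f) $ n" using assms by (cases n) auto
qed

lemma part2:
  assumes P: "is_PID TYPE('b::idom)" and irr: "irreducible (f :: 'b fps)"
  shows "associated f fps_X \<or> (\<exists>p n. prime_elem p \<and> associated (f $ 0) (p ^ n))"
proof (cases "f $ 0 = 0")
  case True
  have fx: "f = fps_X * fps_shift 1 f" using fps_X_factor[OF True] .
  have "\<not> (fps_X :: 'b fps) dvd 1" using fps_unit_iff0[of "fps_X :: 'b fps"] by simp
  hence "fps_shift 1 f dvd 1" using irr fx irreducibleD by blast
  then obtain s where s: "1 = fps_shift 1 f * s" by (auto simp: dvd_def)
  have "fps_X = fps_X * (fps_shift 1 f * s)" using s by simp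
  also have "\<dots> = f * s" using fx by (simp add: algebra_simps)
  finally have "f dvd fps_X" by (metis dvd_triv_left)
  moreover have "fps_X dvd f" using fx by (metis dvd_triv_left)
  ultimately show ?thesis by (simp add: associated_def)
next
  case False
  define x where "x = f $ 0"
  have x0: "x \<noteq> 0" using False by (simp add: x_def)
  from part1a[OF irr] have nu: "\<not> x dvd 1"
    and C: "\<forall>a b. x = a * b \<and> comaximal a b \<longrightarrow> a dvd 1 \<or> b dvd 1" by (auto simp: x_def)
  obtain q where q: "irreducible q" "q dvd x" using pid_irr_divisor[OF P x0 nu] by blast
  have qp: "prime_elem q" using pid_irr_prime[OF P q(1)] .
  have "\<exists>n. \<not> q ^ n dvd x"
  proof (rule ccontr)
    assume "\<not> (\<exists>n. \<not> q ^ n dvd x)"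
    hence all: "\<forall>n. q ^ n dvd x" by blast
    define g where "g n = (SOME c. x = q ^ n * c)" for n
    have gx: "x = q ^ n * g n" for n
      unfolding g_def using all[rule_format, of n] by (auto simp: dvd_def intro: someI_ex)
    have q0: "q \<noteq> 0" "\<not> q dvd 1" using qp by (auto simp: prime_elem_def)
    have "\<forall>n. g n \<noteq> 0 \<and> (\<exists>b. g n = g (Suc n) * b \<and> \<not> b dvd 1)"
    proof
      fix n
      have g0: "g n \<noteq> 0" using gx[of n] x0 by auto
      have "q ^ n * g n = q ^ n * (g (Suc n) * q)"
        using gx[of n] gx[of "Suc n"] by (metis mult.assoc mult.commute power_Suc)
      moreover have "q ^ n \<noteq> 0" using q0 by simp
      ultimately have "g n = g (Suc n) * q" using mult_cancel_left by blast
      with g0 show "g n \<noteq> 0 \<and> (\<exists>b. g n = g (Suc n) * b \<and> \<not> b dvd 1)" using q0 by blast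
    qed
    thus False using pid_no_desc[OF P] by blast
  qed
  then obtain m where m: "\<not> q ^ m dvd x" by blast
  define n where "n = (LEAST n. \<not> q ^ n dvd x)"
  have n1: "\<not> q ^ n dvd x" unfolding n_def using m by (rule LeastI)
  have n0: "n \<noteq> 0" using n1 by (cases n) auto
  then obtain k where nk: "n = Suc k" by (cases n) auto
  have "q ^ k dvd x" using nk not_less_Least[of k "\<lambda>n. \<not> q ^ n dvd x"] by (auto simp: n_def)
  then obtain c where c: "x = q ^ k * c" by (auto simp: dvd_def)
  have k0: "k \<noteq> 0"
  proof
    assume "k = 0" hence "n = 1" using nk by simp
    thus False using n1 q(2) by simp
  qed
  have nqc: "\<not> q dvd c"
  proof
    assume "q dvd c"
    then obtain c' where "c = q * c'" by (auto simp: dvd_def)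
    hence "x = q ^ n * c'" using c nk by (simp add: algebra_simps)
    thus False using n1 by (metis dvd_triv_left)
  qed
  obtain d u v where d: "d dvd q ^ k" "d dvd c" "d = q^k*u + c*v" using pid_bezout[OF P] by blast
  have qpow0: "q ^ k \<noteq> 0" using qp by (simp add: prime_elem_def)
  have "d dvd 1"
  proof (rule ccontr)
    assume dn: "\<not> d dvd 1"
    have "d \<noteq> 0" using d(1) qpow0 by auto
    then obtain r where r: "irreducible r" "r dvd d" using pid_irr_divisor[OF P _ dn] by blast
    have rp: "prime_elem r" using pid_irr_prime[OF P r(1)] .
    have "r dvd q ^ k" using r(2) d(1) dvd_trans by blast
    hence "r dvd q" using rp prime_elem_dvd_power by blast
    hence "q dvd r" using prime_dvd_prime_assoc[OF qp rp] by (simp add: associated_def)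
    hence "q dvd c" using r(2) d(2) dvd_trans by blast
    thus False using nqc by blast
  qed
  then obtain e where e: "1 = d * e" by (auto simp: dvd_def)
  have "q^k * (u*e) + c * (v*e) = 1" using e d(3) by (simp add: algebra_simps)
  hence "comaximal (q^k) c" by (auto simp: comaximal_def)
  hence "q^k dvd 1 \<or> c dvd 1" using C c by blast
  moreover have "\<not> q^k dvd 1" 
  proof
    assume "q^k dvd 1"
    moreover have "q dvd q^k" using k0 by (simp add: dvd_power)
    ultimately have "q dvd 1" using dvd_trans by blast
    thus False using qp by (simp add: prime_elem_def)
  qed
  ultimately have cu: "c dvd 1" by blast
  have "associated x (q^k)" unfolding associated_def
  proof
    obtain s where s: "1 = c * s" using cu by (auto simp: dvd_def)
    have "q^k = q^k * (c * s)" using s by simp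
    also have "\<dots> = x * s" using c by (simp add: algebra_simps)
    finally show "x dvd q^k" by (metis dvd_triv_left)
    show "q^k dvd x" using c by simp
  qed
  thus ?thesis using qp by (auto simp: x_def)
qed



lemma comax_mult:
  fixes p c1 c2 :: "'a::comm_ring_1"
  assumes "comaximal p c1" "comaximal p c2" shows "comaximal p (c1 * c2)"
proof -
  obtain x1 y1 x2 y2 where "p*x1 + c1*y1 = 1" "p*x2 + c2*y2 = 1" using assms by (auto simp: comaximal_def)
  hence "(p*x1 + c1*y1) * (p*x2 + c2*y2) = 1" by simp
  hence "p * (x1*p*x2 + x1*c2*y2 + c1*y1*x2) + (c1*c2)*(y1*y2) = 1" by (simp add: algebra_simps)
  thus ?thesis by (auto simp: comaximal_def)
qed

lemma comax_prime:
  fixes p b :: "'a::{factorial_semiring,idom}"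
  assumes H: "\<forall>\<pi> \<sigma> :: 'a. prime_elem \<pi> \<and> prime_elem \<sigma> \<and> \<not> associated \<pi> \<sigma> \<longrightarrow> comaximal \<pi> \<sigma>"
    and p: "prime_elem p"
  shows "b \<noteq> 0 \<longrightarrow> \<not> p dvd b \<longrightarrow> comaximal p b"
proof (induction b rule: prime_divisors_induct)
  case zero then show ?case by simp
next
  case (unit x)
  then obtain y where "1 = x * y" by (auto simp: dvd_def)
  hence "p * 0 + x * y = 1" by simp
  then show ?case unfolding comaximal_def by blast
next
  case (factor q x)
  show ?case
  proof (intro impI)
    assume nz: "q * x \<noteq> 0" and nd: "\<not> p dvd q * x"
    have "\<not> p dvd q" using nd by (meson dvd_mult2)
    hence "\<not> associated p q" by (auto simp: associated_def)
    hence "comaximal p q" using H p factor.hyps by (auto intro: prime_imp_prime_elem)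
    moreover have "comaximal p x" using factor.IH nz nd by (metis dvd_mult mult_not_zero)
    ultimately show "comaximal p (q * x)" by (rule comax_mult)
  qed
qed

lemma bezout_fact:
  fixes a :: "'a::{factorial_semiring,idom}"
  assumes H: "\<forall>\<pi> \<sigma> :: 'a. prime_elem \<pi> \<and> prime_elem \<sigma> \<and> \<not> associated \<pi> \<sigma> \<longrightarrow> comaximal \<pi> \<sigma>"
  shows "a \<noteq> 0 \<longrightarrow> (\<forall>b. \<exists>d. d dvd a \<and> d dvd b \<and> (\<exists>u v. d = a*u + b*v))"
proof (induction a rule: prime_divisors_induct)
  case zero then show ?case by simp
next
  case (unit x)
  show ?case
  proof (intro impI allI)
    fix b show "\<exists>d. d dvd x \<and> d dvd b \<and> (\<exists>u v. d = x*u + b*v)"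
      by (rule exI[of _ x]) (use unit in \<open>auto intro: exI[of _ 1] exI[of _ 0]\<close>)
  qed
next
  case (factor p x)
  show ?case
  proof (intro impI allI)
    fix b assume nz: "p * x \<noteq> 0"
    hence x0: "x \<noteq> 0" by auto
    show "\<exists>d. d dvd p * x \<and> d dvd b \<and> (\<exists>u v. d = p * x*u + b*v)"
    proof (cases "p dvd b")
      case True
      then obtain b' where b': "b = p * b'" by (auto simp: dvd_def)
      obtain d u v where d: "d dvd x" "d dvd b'" "d = x*u + b'*v" using factor.IH x0 by blast
      have "p*d dvd p*x" "p*d dvd b" using d b' by auto
      moreover have "p*d = p*x*u + b*v" using d b' by (simp add: algebra_simps)
      ultimately show ?thesis by blast
    next
      case False
      hence b0: "b \<noteq> 0" by auto
      have "comaximal p b" using comax_prime[OF H] factor.hyps b0 False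
        by (auto intro: prime_imp_prime_elem)
      then obtain s t where st: "p*s + b*t = 1" by (auto simp: comaximal_def)
      obtain d u v where d: "d dvd x" "d dvd b" "d = x*u + b*v" using factor.IH x0 by blast
      have "d = x*u*(p*s + b*t) + b*v" using d st by simp
      also have "\<dots> = p*x*(u*s) + b*(x*u*t + v)" by (simp add: algebra_simps)
      finally show ?thesis using d by (intro exI[of _ d]) auto
    qed
  qed
qed

lemma pid_fact:
  assumes H: "\<forall>\<pi> \<sigma> :: 'a::{factorial_semiring,idom}. prime_elem \<pi> \<and> prime_elem \<sigma> \<and> \<not> associated \<pi> \<sigma> \<longrightarrow> comaximal \<pi> \<sigma>"
  shows "is_PID TYPE('a)"
  unfolding is_PID_def
proof (intro allI impI)
  fix I :: "'a set" assume I: "ring_ideal I"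
  have I0: "0 \<in> I" and Iadd: "\<And>x y. x \<in> I \<Longrightarrow> y \<in> I \<Longrightarrow> x + y \<in> I"
    and Imul: "\<And>r x. x \<in> I \<Longrightarrow> r * x \<in> I" using I by (auto simp: ring_ideal_def)
  show "\<exists>a. I = {a * r |r. True}"
  proof (cases "\<exists>a\<in>I. a \<noteq> 0")
    case False
    hence "I = {0 * r |r. True}" using I0 by auto
    thus ?thesis by blast
  next
    case True
    define m where "m = (LEAST n. \<exists>a\<in>I. a \<noteq> 0 \<and> size (prime_factorization a) = n)"
    have "\<exists>a\<in>I. a \<noteq> 0 \<and> size (prime_factorization a) = m"
      unfolding m_def using True by (rule_tac LeastI_ex) blast
    then obtain a where a: "a \<in> I" "a \<noteq> 0" "size (prime_factorization a) = m" by blast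
    have mmin: "m \<le> size (prime_factorization c)" if "c \<in> I" "c \<noteq> 0" for c
      unfolding m_def using that by (intro Least_le) blast
    have "I \<subseteq> {a * r |r. True}"
    proof
      fix b assume b: "b \<in> I"
      obtain d u v where d: "d dvd a" "d dvd b" "d = a*u + b*v" using bezout_fact[OF H] a(2) by blast
      have dI: "d \<in> I" using d(3) Iadd Imul a(1) b by (metis mult.commute)
      have d0: "d \<noteq> 0" using d(1) a(2) by auto
      have sub: "prime_factorization d \<subseteq># prime_factorization a"
        using prime_factorization_subset_iff_dvd d0 a(2) d(1) by blast
      have "size (prime_factorization a) \<le> size (prime_factorization d)" using mmin[OF dI d0] a(3) by simp
      hence "prime_factorization d = prime_factorization a"
        using sub mset_subset_size subset_mset.le_less by (metis not_le)
      hence "a dvd d" using prime_factorization_subset_iff_dvd d0 a(2) by (metis subset_mset.order_refl)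
      hence "a dvd b" using d(2) by (rule dvd_trans)
      thus "b \<in> {a * r |r. True}" by (auto simp: dvd_def)
    qed
    moreover have "{a * r |r. True} \<subseteq> I" using Imul a(1) by (auto simp: mult.commute[of a])
    ultimately show ?thesis by blast
  qed
qed

lemma part3a:
  assumes np: "\<not> is_PID TYPE('c::{factorial_semiring,idom})"
  shows "\<exists>f :: 'c fps. irreducible f \<and> f $ 0 \<noteq> 0 \<and>
         \<not> (\<exists>p n. prime_elem p \<and> associated (f $ 0) (p ^ n))"
proof -
  obtain \<pi> \<sigma> :: 'c where ps: "prime_elem \<pi>" "prime_elem \<sigma>" "\<not> associated \<pi> \<sigma>" "\<not> comaximal \<pi> \<sigma>"
    using pid_fact np by blast
  define f :: "'c fps" where "f = fps_const (\<pi> * \<sigma>) + fps_X * 1"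
  have "irreducible f" unfolding f_def by (rule part3b[OF ps]) simp
  moreover have "f $ 0 \<noteq> 0" using ps by (simp add: f_def prime_elem_def)
  moreover have "\<not> (\<exists>p n. prime_elem p \<and> associated (f $ 0) (p ^ n))"
  proof
    assume "\<exists>p n. prime_elem p \<and> associated (f $ 0) (p ^ n)"
    then obtain p n where p: "prime_elem p" "associated (\<pi> * \<sigma>) (p ^ n)" by (auto simp: f_def)
    have "\<pi> dvd p ^ n" using p(2) by (auto simp: associated_def intro: dvd_mult_left)
    hence "\<pi> dvd p" using ps(1) prime_elem_dvd_power by blast
    hence 1: "associated p \<pi>" using prime_dvd_prime_assoc p(1) ps(1) by blast
    have "\<sigma> dvd p ^ n" using p(2) by (auto simp: associated_def intro: dvd_mult_right dvd_trans)
    hence "\<sigma> dvd p" using ps(2) prime_elem_dvd_power by blast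
    hence "associated p \<sigma>" using prime_dvd_prime_assoc p(1) ps(2) by blast
    with 1 have "associated \<pi> \<sigma>" by (auto simp: associated_def intro: dvd_trans)
    thus False using ps(3) by blast
  qed
  ultimately show ?thesis by blast
qed

theorem corollary2p3:
  shows
  "(\<forall>f :: 'a::idom fps.
      (irreducible f \<longrightarrow>
         \<not> (f $ 0) dvd 1 \<and>
         (\<forall>a b. f $ 0 = a * b \<and> comaximal a b \<longrightarrow> a dvd 1 \<or> b dvd 1))
    \<and> ((f $ 1) dvd 1 \<and> \<not> (f $ 0) dvd 1 \<and>
         (\<forall>a b. f $ 0 = a * b \<and> comaximal a b \<longrightarrow> a dvd 1 \<or> b dvd 1)
         \<longrightarrow> irreducible f))
   \<and> (is_PID TYPE('b::idom) \<longrightarrow>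
      (\<forall>f :: 'b fps. irreducible f \<longrightarrow>
         associated f fps_X \<or>
         (\<exists>p n. prime_elem p \<and> associated (f $ 0) (p ^ n))))
   \<and> (\<not> is_PID TYPE('c::{factorial_semiring,idom}) \<longrightarrow>
      (\<exists>f :: 'c fps. irreducible f \<and> f $ 0 \<noteq> 0 \<and>
         \<not> (\<exists>p n. prime_elem p \<and> associated (f $ 0) (p ^ n)))
      \<and> (\<forall>\<pi> \<sigma> :: 'c. prime_elem \<pi> \<and> prime_elem \<sigma> \<and> \<not> associated \<pi> \<sigma> \<and>
            \<not> comaximal \<pi> \<sigma> \<longrightarrow>
           (\<forall>U :: 'c fps. U dvd 1 \<longrightarrow> irreducible (fps_const (\<pi> * \<sigma>) + fps_X * U))))"
proof (intro conjI allI impI)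
  fix f :: "'a::idom fps"
  assume "irreducible f" thus "\<not> (f $ 0) dvd 1" using part1a by blast
next
  fix f :: "'a::idom fps" and a b
  assume "irreducible f" "f $ 0 = a * b \<and> comaximal a b"
  thus "a dvd 1 \<or> b dvd 1" using part1a by blast
next
  fix f :: "'a::idom fps"
  assume "(f $ 1) dvd 1 \<and> \<not> (f $ 0) dvd 1 \<and>
         (\<forall>a b. f $ 0 = a * b \<and> comaximal a b \<longrightarrow> a dvd 1 \<or> b dvd 1)"
  thus "irreducible f" using part1b by blast
next
  fix f :: "'b::idom fps"
  assume "is_PID TYPE('b)" "irreducible f"
  thus "associated f fps_X \<or> (\<exists>p n. prime_elem p \<and> associated (f $ 0) (p ^ n))" by (rule part2)
next
  assume "\<not> is_PID TYPE('c::{factorial_semiring,idom})"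
  thus "\<exists>f :: 'c fps. irreducible f \<and> f $ 0 \<noteq> 0 \<and>
         \<not> (\<exists>p n. prime_elem p \<and> associated (f $ 0) (p ^ n))" by (rule part3a)
next
  fix \<pi> \<sigma> :: "'c::{factorial_semiring,idom}" and U :: "'c fps"
  assume "prime_elem \<pi> \<and> prime_elem \<sigma> \<and> \<not> associated \<pi> \<sigma> \<and> \<not> comaximal \<pi> \<sigma>" "U dvd 1"
  thus "irreducible (fps_const (\<pi> * \<sigma>) + fps_X * U)" using part3b by blast
qed

end
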